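(* Let $(x,y)$ be an $\mathbf{x}$-vertex of $S$ and let $x'$ be a vertex of $P_A$ adjacent to $x$ in $P_A$. Then there exists $y^*$ with $\operatorname{supp}(y^* )\subseteq\operatorname{supp}(y)$ such that $(x',y^* )$ is a vertex of $S$ adjacent to $(x,y)$ if and only if $(a_1x',a_2x')\in\operatorname{Band}_{\mathbf{x}}(y)$.
   Context: Let $A\in\mathbb{R}^{m_1\times n_1}$, $a_1,a_2\in\mathbb{R}^{1\times n_1}$, $b_1,b_2\in\mathbb{R}^{1\times n_2}$, $B\in\mathbb{R}^{m_2\times n_2}$, $c_A\in\mathbb{R}^{m_1}$, $c_B\in\mathbb{R}^{m_2}$, and scalars $c_a^1,c_a^2,c_b^1,c_b^2$. Consider the ($3$-sum) polyhedron $S=\{(x,y)\in\mathbb{R}^{n_1}\times\mathbb{R}^{n_2}: Ax=c_A,\ a_1x+b_1y=c_a^1+c_b^1,\ a_2x+b_2y=c_a^2+c_b^2,\ By=c_B,\ x,y\ge 0\}$, assumed simple (nondegenerate). Let $P_A=\{x: Ax=c_A, x\ge 0\}$. A vertex $(x,y)$ of $S$ is an $\mathbf{x}$-vertex if $x$ is a vertex of $P_A$. For such a vertex, $\operatorname{Band}_{\mathbf{x}}(y):=\{(c_a^1+c_b^1-b_1z,\ c_a^2+c_b^2-b_2z) : Bz=c_B,\ \operatorname{supp}(z)\subseteq\operatorname{supp}(y),\ z\ge 0\}\subseteq\mathbb{R}^2$, where $\operatorname{supp}$ denotes the set of indices of nonzero coordinates. *)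

theory Defs
  imports "HOL-Analysis.Analysis"
begin

definition supp :: "real^'n \<Rightarrow> 'n set" where
  "supp v = {i. v $ i \<noteq> 0}"

definition nonneg :: "real^'n \<Rightarrow> bool" where
  "nonneg v \<longleftrightarrow> (\<forall>i. 0 \<le> v $ i)"

definition PA :: "real^'n^'m \<Rightarrow> real^'m \<Rightarrow> (real^'n) set" where
  "PA A cA = {x. A *v x = cA \<and> nonneg x}"

definition S3 :: "real^'n1^'m1 \<Rightarrow> real^'n1 \<Rightarrow> real^'n1 \<Rightarrow> real^'n2 \<Rightarrow> real^'n2 \<Rightarrow> real^'n2^'m2
    \<Rightarrow> real^'m1 \<Rightarrow> real^'m2 \<Rightarrow> real \<Rightarrow> real \<Rightarrow> real \<Rightarrow> real \<Rightarrow> ((real^'n1) \<times> (real^'n2)) set" where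
  "S3 A a1 a2 b1 b2 B cA cB ca1 ca2 cb1 cb2 =
     {(x, y). A *v x = cA \<and> a1 \<bullet> x + b1 \<bullet> y = ca1 + cb1 \<and> a2 \<bullet> x + b2 \<bullet> y = ca2 + cb2
        \<and> B *v y = cB \<and> nonneg x \<and> nonneg y}"

definition S3_kernel :: "real^'n1^'m1 \<Rightarrow> real^'n1 \<Rightarrow> real^'n1 \<Rightarrow> real^'n2 \<Rightarrow> real^'n2 \<Rightarrow> real^'n2^'m2
    \<Rightarrow> ((real^'n1) \<times> (real^'n2)) set" where
  "S3_kernel A a1 a2 b1 b2 B =
     {(u, v). A *v u = 0 \<and> a1 \<bullet> u + b1 \<bullet> v = 0 \<and> a2 \<bullet> u + b2 \<bullet> v = 0 \<and> B *v v = 0}"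

text \<open>Simple (nondegenerate): every vertex of S has exactly rank(M) nonzero coordinates,
  where M is the constraint matrix of S; rank(M) = n1 + n2 - dim ker M.\<close>
definition simple3 :: "real^'n1^'m1 \<Rightarrow> real^'n1 \<Rightarrow> real^'n1 \<Rightarrow> real^'n2 \<Rightarrow> real^'n2 \<Rightarrow> real^'n2^'m2
    \<Rightarrow> real^'m1 \<Rightarrow> real^'m2 \<Rightarrow> real \<Rightarrow> real \<Rightarrow> real \<Rightarrow> real \<Rightarrow> bool" where
  "simple3 A a1 a2 b1 b2 B cA cB ca1 ca2 cb1 cb2 \<longleftrightarrow>
     (\<forall>x y. (x, y) extreme_point_of S3 A a1 a2 b1 b2 B cA cB ca1 ca2 cb1 cb2 \<longrightarrow>
        card (supp x) + card (supp y) + dim (S3_kernel A a1 a2 b1 b2 B) = CARD('n1) + CARD('n2))"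

definition adjacent :: "'a::real_vector set \<Rightarrow> 'a \<Rightarrow> 'a \<Rightarrow> bool" where
  "adjacent P u v \<longleftrightarrow> u extreme_point_of P \<and> v extreme_point_of P \<and> u \<noteq> v
      \<and> closed_segment u v face_of P"

definition Band :: "real^'n2 \<Rightarrow> real^'n2 \<Rightarrow> real^'n2^'m2 \<Rightarrow> real^'m2
    \<Rightarrow> real \<Rightarrow> real \<Rightarrow> real \<Rightarrow> real \<Rightarrow> real^'n2 \<Rightarrow> (real \<times> real) set" where
  "Band b1 b2 B cB ca1 ca2 cb1 cb2 y =
     {(ca1 + cb1 - b1 \<bullet> z, ca2 + cb2 - b2 \<bullet> z) | z. B *v z = cB \<and> supp z \<subseteq> supp y \<and> nonneg z}"

end

theory Submission
  imports Defs
begin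

lemma convex_S3: "convex (S3 A a1 a2 b1 b2 B cA cB ca1 ca2 cb1 cb2)"
proof (rule convexI)
  fix p q :: "(real^'a) \<times> (real^'b)" and s t :: real
  assume p: "p \<in> S3 A a1 a2 b1 b2 B cA cB ca1 ca2 cb1 cb2"
    and q: "q \<in> S3 A a1 a2 b1 b2 B cA cB ca1 ca2 cb1 cb2"
    and st: "0 \<le> s" "0 \<le> t" "s + t = 1"
  obtain u1 v1 where pe: "p = (u1, v1)" by (cases p)
  obtain u2 v2 where qe: "q = (u2, v2)" by (cases q)
  have h: "A *v u1 = cA" "a1 \<bullet> u1 + b1 \<bullet> v1 = ca1 + cb1" "a2 \<bullet> u1 + b2 \<bullet> v1 = ca2 + cb2"
    "B *v v1 = cB" "\<forall>i. 0 \<le> u1 $ i" "\<forall>i. 0 \<le> v1 $ i"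
    "A *v u2 = cA" "a1 \<bullet> u2 + b1 \<bullet> v2 = ca1 + cb1" "a2 \<bullet> u2 + b2 \<bullet> v2 = ca2 + cb2"
    "B *v v2 = cB" "\<forall>i. 0 \<le> u2 $ i" "\<forall>i. 0 \<le> v2 $ i"
    using p q pe qe by (auto simp: S3_def nonneg_def)
  have e1: "a1 \<bullet> (s *\<^sub>R u1 + t *\<^sub>R u2) + b1 \<bullet> (s *\<^sub>R v1 + t *\<^sub>R v2)
      = s * (a1 \<bullet> u1 + b1 \<bullet> v1) + t * (a1 \<bullet> u2 + b1 \<bullet> v2)"
    by (simp add: inner_add_right algebra_simps)
  have e2: "a2 \<bullet> (s *\<^sub>R u1 + t *\<^sub>R u2) + b2 \<bullet> (s *\<^sub>R v1 + t *\<^sub>R v2)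
      = s * (a2 \<bullet> u1 + b2 \<bullet> v1) + t * (a2 \<bullet> u2 + b2 \<bullet> v2)"
    by (simp add: inner_add_right algebra_simps)
  have c: "s *\<^sub>R cA + t *\<^sub>R cA = cA" "s *\<^sub>R cB + t *\<^sub>R cB = cB"
    using st(3) by (metis scaleR_add_left scaleR_one)+
  have r1: "a1 \<bullet> (s *\<^sub>R u1 + t *\<^sub>R u2) + b1 \<bullet> (s *\<^sub>R v1 + t *\<^sub>R v2) = ca1 + cb1"
    using e1 h(2,8) st(3) by (metis distrib_right mult_1)
  have r2: "a2 \<bullet> (s *\<^sub>R u1 + t *\<^sub>R u2) + b2 \<bullet> (s *\<^sub>R v1 + t *\<^sub>R v2) = ca2 + cb2"
    using e2 h(3,9) st(3) by (metis distrib_right mult_1)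
  have r3: "A *v (s *\<^sub>R u1 + t *\<^sub>R u2) = cA" "B *v (s *\<^sub>R v1 + t *\<^sub>R v2) = cB"
    using h c by (simp_all add: matrix_vector_right_distrib matrix_vector_mult_scaleR)
  have r4: "0 \<le> s * u1 $ i + t * u2 $ i" for i
    using h st by (simp add: add_nonneg_nonneg mult_nonneg_nonneg)
  have r5: "0 \<le> s * v1 $ i + t * v2 $ i" for i
    using h st by (simp add: add_nonneg_nonneg mult_nonneg_nonneg)
  show "s *\<^sub>R p + t *\<^sub>R q \<in> S3 A a1 a2 b1 b2 B cA cB ca1 ca2 cb1 cb2"
    using r1 r2 r3 r4 r5 pe qe by (simp add: S3_def nonneg_def)
qed

lemma eps_exists:
  fixes w y :: "real^'n"
  assumes "supp w \<subseteq> supp y" "nonneg y"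
  shows "\<exists>e>0. \<forall>i. e * \<bar>w $ i\<bar> \<le> y $ i"
proof -
  define f where "f i = (if w $ i = 0 then 1 else y $ i / \<bar>w $ i\<bar>)" for i
  have fpos: "f i > 0" for i
  proof (cases "w $ i = 0")
    case False
    then have "y $ i \<noteq> 0" using assms(1) by (auto simp: supp_def)
    then have "y $ i > 0" using assms(2) by (auto simp: nonneg_def less_le)
    then show ?thesis using False by (simp add: f_def)
  qed (simp add: f_def)
  define e where "e = Min (range f)"
  have "e > 0" unfolding e_def using fpos by (simp add: Min_gr_iff)
  moreover have "e * \<bar>w $ i\<bar> \<le> y $ i" for i
  proof (cases "w $ i = 0")
    case True then show ?thesis using assms(2) by (simp add: nonneg_def)
  next
    case False
    have "e \<le> f i" unfolding e_def by simp
    then have "e * \<bar>w $ i\<bar> \<le> f i * \<bar>w $ i\<bar>" by (simp add: mult_right_mono)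
    also have "\<dots> = y $ i" using False by (simp add: f_def)
    finally show ?thesis .
  qed
  ultimately show ?thesis by blast
qed

lemma kernel_unique:
  assumes ext: "(x, y) extreme_point_of S3 A a1 a2 b1 b2 B cA cB ca1 ca2 cb1 cb2"
    and m1: "(u, v1) \<in> S3 A a1 a2 b1 b2 B cA cB ca1 ca2 cb1 cb2"
    and m2: "(u, v2) \<in> S3 A a1 a2 b1 b2 B cA cB ca1 ca2 cb1 cb2"
    and s1: "supp v1 \<subseteq> supp y" and s2: "supp v2 \<subseteq> supp y"
  shows "v1 = v2"
proof (rule ccontr)
  assume ne: "v1 \<noteq> v2"
  define w where "w = v1 - v2"
  have wne: "w \<noteq> 0" using ne by (simp add: w_def)
  have sw: "supp w \<subseteq> supp y" proof
    fix i assume "i \<in> supp w"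
    then have "v1 $ i \<noteq> 0 \<or> v2 $ i \<noteq> 0" by (auto simp: supp_def w_def)
    then show "i \<in> supp y" using s1 s2 by (auto simp: supp_def)
  qed
  have yS: "(x, y) \<in> S3 A a1 a2 b1 b2 B cA cB ca1 ca2 cb1 cb2"
    using ext by (simp add: extreme_point_of_def)
  then have ny: "nonneg y" by (simp add: S3_def)
  obtain e where e: "e > 0" "\<And>i. e * \<bar>w $ i\<bar> \<le> y $ i" using eps_exists[OF sw ny] by blast
  have Bw: "B *v w = 0" using m1 m2 by (simp add: S3_def w_def matrix_vector_mult_diff_distrib)
  have b1w: "b1 \<bullet> w = 0" using m1 m2 by (simp add: S3_def w_def inner_diff_right)
  have b2w: "b2 \<bullet> w = 0" using m1 m2 by (simp add: S3_def w_def inner_diff_right)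
  have inS: "(x, y + c *\<^sub>R w) \<in> S3 A a1 a2 b1 b2 B cA cB ca1 ca2 cb1 cb2" if "\<bar>c\<bar> \<le> e" for c
  proof -
    have "0 \<le> y $ i + c * w $ i" for i
    proof -
      have "\<bar>c * w $ i\<bar> \<le> e * \<bar>w $ i\<bar>" using that by (simp add: abs_mult mult_right_mono)
      then show ?thesis using e(2)[of i] by linarith
    qed
    then show ?thesis using yS Bw b1w b2w
      by (simp add: S3_def nonneg_def matrix_vector_right_distrib matrix_vector_mult_scaleR inner_add_right)
  qed
  have "(x, y) = midpoint (x, y + e *\<^sub>R w) (x, y + (-e) *\<^sub>R w)"
    by (simp add: midpoint_def scaleR_add_right[symmetric])
  moreover have "(x, y + e *\<^sub>R w) \<noteq> (x, y + (-e) *\<^sub>R w)"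
  proof
    assume "(x, y + e *\<^sub>R w) = (x, y + (-e) *\<^sub>R w)"
    then have "e *\<^sub>R w = (-e) *\<^sub>R w" by simp
    then have "e *\<^sub>R w + e *\<^sub>R w = 0" by (simp add: eq_neg_iff_add_eq_0)
    then have "(2 * e) *\<^sub>R w = 0" by (simp only: mult_2 scaleR_add_left)
    then show False using e(1) wne by (simp only: scaleR_eq_0_iff) simp
  qed
  ultimately have "(x, y) \<in> open_segment (x, y + e *\<^sub>R w) (x, y + (-e) *\<^sub>R w)"
    by (metis midpoint_in_open_segment)
  moreover have "(x, y + e *\<^sub>R w) \<in> S3 A a1 a2 b1 b2 B cA cB ca1 ca2 cb1 cb2"
    "(x, y + (-e) *\<^sub>R w) \<in> S3 A a1 a2 b1 b2 B cA cB ca1 ca2 cb1 cb2"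
    by (rule inS, use e(1) in simp)+
  ultimately show False using ext by (auto simp: extreme_point_of_def)
qed

theorem lemma6:
  fixes A :: "real^'n1^'m1" and B :: "real^'n2^'m2"
    and a1 a2 :: "real^'n1" and b1 b2 :: "real^'n2"
    and cA :: "real^'m1" and cB :: "real^'m2"
    and ca1 ca2 cb1 cb2 :: real
    and x x' :: "real^'n1" and y :: "real^'n2"
  assumes "simple3 A a1 a2 b1 b2 B cA cB ca1 ca2 cb1 cb2"
    and "(x, y) extreme_point_of S3 A a1 a2 b1 b2 B cA cB ca1 ca2 cb1 cb2"
    and "x extreme_point_of PA A cA"
    and "adjacent (PA A cA) x x'"
  shows "(\<exists>ys. supp ys \<subseteq> supp y \<and> (x', ys) extreme_point_of S3 A a1 a2 b1 b2 B cA cB ca1 ca2 cb1 cb2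
            \<and> adjacent (S3 A a1 a2 b1 b2 B cA cB ca1 ca2 cb1 cb2) (x, y) (x', ys))
         \<longleftrightarrow> (a1 \<bullet> x', a2 \<bullet> x') \<in> Band b1 b2 B cB ca1 ca2 cb1 cb2 y"
proof
  assume "\<exists>ys. supp ys \<subseteq> supp y \<and> (x', ys) extreme_point_of S3 A a1 a2 b1 b2 B cA cB ca1 ca2 cb1 cb2
            \<and> adjacent (S3 A a1 a2 b1 b2 B cA cB ca1 ca2 cb1 cb2) (x, y) (x', ys)"
  then obtain ys where ys: "supp ys \<subseteq> supp y" "(x', ys) \<in> S3 A a1 a2 b1 b2 B cA cB ca1 ca2 cb1 cb2"
    by (auto simp: extreme_point_of_def)
  then have "a1 \<bullet> x' = ca1 + cb1 - b1 \<bullet> ys" "a2 \<bullet> x' = ca2 + cb2 - b2 \<bullet> ys"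
    "B *v ys = cB" "nonneg ys"
    by (auto simp: S3_def)
  then show "(a1 \<bullet> x', a2 \<bullet> x') \<in> Band b1 b2 B cB ca1 ca2 cb1 cb2 y"
    using ys(1) unfolding Band_def by blast
next
  let ?S = "S3 A a1 a2 b1 b2 B cA cB ca1 ca2 cb1 cb2"
  assume "(a1 \<bullet> x', a2 \<bullet> x') \<in> Band b1 b2 B cB ca1 ca2 cb1 cb2 y"
  then obtain z where z: "B *v z = cB" "supp z \<subseteq> supp y" "nonneg z"
    "a1 \<bullet> x' = ca1 + cb1 - b1 \<bullet> z" "a2 \<bullet> x' = ca2 + cb2 - b2 \<bullet> z"
    unfolding Band_def by auto
  have adjA: "x extreme_point_of PA A cA" "x' extreme_point_of PA A cA" "x \<noteq> x'"
    "closed_segment x x' face_of PA A cA"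
    using assms(4) by (auto simp: adjacent_def)
  have x'P: "x' \<in> PA A cA" using adjA(2) by (simp add: extreme_point_of_def)
  define p where "p = (x, y)"
  define q where "q = (x', z)"
  have pS: "p \<in> ?S" using assms(2) by (simp add: extreme_point_of_def p_def)
  have qS: "q \<in> ?S" using x'P z by (simp add: q_def S3_def PA_def)
  have pq: "p \<noteq> q" using adjA(3) by (simp add: p_def q_def)
  have cvx: "convex ?S" by (rule convex_S3)
  have key: "a \<in> closed_segment p q"
    if a: "a \<in> ?S" and b: "b \<in> ?S" and w: "w \<in> closed_segment p q" and wab: "w \<in> open_segment a b"
    for a b w
  proof -
    obtain u1 v1 where ae: "a = (u1, v1)" by (cases a)
    obtain u2 v2 where be: "b = (u2, v2)" by (cases b)
    obtain t where t: "0 < t" "t < 1" "w = (1 - t) *\<^sub>R a + t *\<^sub>R b" "a \<noteq> b"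
      using wab by (auto simp: in_segment)
    obtain s where s: "0 \<le> s" "s \<le> 1" "w = (1 - s) *\<^sub>R p + s *\<^sub>R q"
      using w by (auto simp: in_segment)
    have wu: "fst w = (1 - t) *\<^sub>R u1 + t *\<^sub>R u2" "fst w = (1 - s) *\<^sub>R x + s *\<^sub>R x'"
      using t s by (auto simp: ae be p_def q_def)
    have wv: "snd w = (1 - t) *\<^sub>R v1 + t *\<^sub>R v2" "snd w = (1 - s) *\<^sub>R y + s *\<^sub>R z"
      using t s by (auto simp: ae be p_def q_def)
    have u1P: "u1 \<in> PA A cA" "u2 \<in> PA A cA" using a b ae be by (auto simp: S3_def PA_def)
    have fwseg: "fst w \<in> closed_segment x x'" using wu(2) s by (auto simp: in_segment)
    have u1seg: "u1 \<in> closed_segment x x'"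
    proof (cases "u1 = u2")
      case True
      then have "fst w = u1" using wu(1) by (simp add: scaleR_add_left[symmetric])
      then show ?thesis using fwseg by simp
    next
      case False
      then have "fst w \<in> open_segment u1 u2" using wu(1) t by (auto simp: in_segment)
      then show ?thesis using face_ofD[OF adjA(4) _ u1P fwseg] by blast
    qed
    then obtain m where m: "0 \<le> m" "m \<le> 1" "u1 = (1 - m) *\<^sub>R x + m *\<^sub>R x'"
      by (auto simp: in_segment)
    have nv: "nonneg v1" "nonneg v2" using a b ae be by (auto simp: S3_def)
    have nyz: "nonneg y" "nonneg z" using pS z(3) by (auto simp: p_def S3_def)
    have sv1: "supp v1 \<subseteq> supp y"
    proof
      fix i assume i: "i \<in> supp v1"
      show "i \<in> supp y"
      proof (rule ccontr)
        assume "i \<notin> supp y"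
        then have y0: "y $ i = 0" and z0: "z $ i = 0" using z(2) by (auto simp: supp_def)
        have "(1 - t) * v1 $ i + t * v2 $ i = (1 - s) * y $ i + s * z $ i"
        proof -
          have "((1 - t) *\<^sub>R v1 + t *\<^sub>R v2) $ i = ((1 - s) *\<^sub>R y + s *\<^sub>R z) $ i"
            using wv by simp
          then show ?thesis by simp
        qed
        then have e0: "(1 - t) * v1 $ i + t * v2 $ i = 0" using y0 z0 by simp
        have "0 \<le> v1 $ i" "0 \<le> v2 $ i" using nv by (auto simp: nonneg_def)
        moreover have "v1 $ i \<noteq> 0" using i by (simp add: supp_def)
        ultimately have "0 < (1 - t) * v1 $ i" using t by simp
        moreover have "0 \<le> t * v2 $ i" using t \<open>0 \<le> v2 $ i\<close> by simp
        ultimately show False using e0 by linarith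
      qed
    qed
    define r where "r = (1 - m) *\<^sub>R p + m *\<^sub>R q"
    have rS: "r \<in> ?S" unfolding r_def using cvx pS qS m
      by (simp add: convex_def)
    have rseg: "r \<in> closed_segment p q" unfolding r_def using m by (auto simp: in_segment)
    have rfst: "r = (u1, (1 - m) *\<^sub>R y + m *\<^sub>R z)" using m(3) by (simp add: r_def p_def q_def)
    have sr: "supp ((1 - m) *\<^sub>R y + m *\<^sub>R z) \<subseteq> supp y"
    proof
      fix i assume i: "i \<in> supp ((1 - m) *\<^sub>R y + m *\<^sub>R z)"
      show "i \<in> supp y"
      proof (rule ccontr)
        assume "i \<notin> supp y"
        then have "y $ i = 0" "z $ i = 0" using z(2) by (auto simp: supp_def)
        then show False using i by (simp add: supp_def)
      qed
    qed
    have "v1 = (1 - m) *\<^sub>R y + m *\<^sub>R z"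
      using kernel_unique[OF assms(2), of u1 v1 "(1 - m) *\<^sub>R y + m *\<^sub>R z"] a ae rS rfst sv1 sr
      by simp
    then have "a = r" using ae rfst by simp
    then show ?thesis using rseg by simp
  qed
  have face: "closed_segment p q face_of ?S"
    unfolding face_of_def
  proof (intro conjI ballI impI)
    show "closed_segment p q \<subseteq> ?S" using cvx pS qS by (simp add: closed_segment_subset)
    show "convex (closed_segment p q)" by simp
    fix a b w assume "a \<in> ?S" "b \<in> ?S" "w \<in> closed_segment p q" "w \<in> open_segment a b"
    then show "a \<in> closed_segment p q" "b \<in> closed_segment p q"
      using key open_segment_commute by metis+
  qed
  have "q extreme_point_of closed_segment p q"
  proof -
    have "q \<notin> convex hull {p}" using pq by simp
    then have "q extreme_point_of convex hull (insert q {p})"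
      by (intro extreme_point_of_convex_hull_insert) auto
    then show ?thesis by (simp add: segment_convex_hull insert_commute)
  qed
  then have qext: "q extreme_point_of ?S" using extreme_point_of_face[OF face] by blast
  show "\<exists>ys. supp ys \<subseteq> supp y \<and> (x', ys) extreme_point_of ?S \<and> adjacent ?S (x, y) (x', ys)"
    using z(2) qext assms(2) pq face by (auto simp: adjacent_def p_def q_def)
qed

end
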